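(* Let $\mathcal{H}$ be an infinite dimensional complex Hilbert space and let $\phi:\mathcal{B}(\mathcal{H})\to\mathcal{B}(\mathcal{H})$ be a bijective map preserving the Douglas solution in both directions. Then $\phi$ preserves range inclusion in both directions: for all $A,B\in\mathcal{B}(\mathcal{H})$, $\operatorname{ran}A\subseteq\operatorname{ran}B$ if and only if $\operatorname{ran}\phi(A)\subseteq\operatorname{ran}\phi(B)$. Moreover, for every $B\in\mathcal{B}(\mathcal{H})$ of rank one, $\phi(B)$ is of rank one, and the assignment $\operatorname{ran}A\mapsto\operatorname{ran}\phi(A)$ is a well-defined map which restricts to a bijection of the set of one-dimensional subspaces $\{\mathbb{C}e: e\in\mathcal{H}, e\neq0\}$ onto itself.
   Context: $\mathcal{B}(\mathcal{H})$ denotes the algebra of all bounded linear operators on $\mathcal{H}$. For $A,B\in\mathcal{B}(\mathcal{H})$ with $\operatorname{ran}A\subseteq\operatorname{ran}B$, the Douglas solution of $A=BX$ is the unique $D\in\mathcal{B}(\mathcal{H})$ with $BD=A$ and $\operatorname{ran}D\subseteq(\ker B)^\perp$ (it exists exactly when $\operatorname{ran}A\subseteq\operatorname{ran}B$). A map $\phi:\mathcal{B}(\mathcal{H})\to\mathcal{B}(\mathcal{H})$ preserves the Douglas solution in both directions if for all $A,B,X\in\mathcal{B}(\mathcal{H})$: $X$ is the Douglas solution of $A=BX$ if and only if $\phi(X)$ is the Douglas solution of $\phi(A)=\phi(B)Y$. *)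

theory Defs
  imports "HOL-Analysis.Analysis"
begin

text \<open>The library only has real inner product spaces, so a
complex Hilbert space is encoded as a real Hilbert space (real inner product = real part
of the complex inner product, complete) together with a complex scalar multiplication
compatible with the real one, for which multiplication by i is isometric.\<close>

class complex_hilbert = real_inner + complete_space +
  fixes scaleC :: "complex \<Rightarrow> 'a \<Rightarrow> 'a"
  assumes scaleC_add_right: "scaleC a (x + y) = scaleC a x + scaleC a y"
    and scaleC_add_left: "scaleC (a + b) x = scaleC a x + scaleC b x"
    and scaleC_scaleC: "scaleC a (scaleC b x) = scaleC (a * b) x"
    and scaleC_one: "scaleC 1 x = x"
    and scaleC_of_real: "scaleC (complex_of_real r) x = scaleR r x"
    and inner_scaleC_ii: "inner (scaleC \<i> x) (scaleC \<i> y) = inner x y"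

definition cinner :: "'a::complex_hilbert \<Rightarrow> 'a \<Rightarrow> complex" where
  "cinner x y = Complex (inner x y) (inner (scaleC \<i> x) y)"

definition bop :: "('a::complex_hilbert \<Rightarrow> 'a) \<Rightarrow> bool" where
  "bop T \<longleftrightarrow> bounded_linear T \<and> (\<forall>c x. T (scaleC c x) = scaleC c (T x))"

definition BH :: "('a::complex_hilbert \<Rightarrow> 'a) set" where
  "BH = {T. bop T}"

definition ker :: "('a::complex_hilbert \<Rightarrow> 'a) \<Rightarrow> 'a set" where
  "ker T = {x. T x = 0}"

definition orth_compl :: "'a::complex_hilbert set \<Rightarrow> 'a set" where
  "orth_compl S = {y. \<forall>x\<in>S. cinner x y = 0}"

definition douglas_solution ::
  "('a::complex_hilbert \<Rightarrow> 'a) \<Rightarrow> ('a \<Rightarrow> 'a) \<Rightarrow> ('a \<Rightarrow> 'a) \<Rightarrow> bool" where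
  "douglas_solution A B D \<longleftrightarrow> bop D \<and> B \<circ> D = A \<and> range D \<subseteq> orth_compl (ker B)"

definition cline :: "'a::complex_hilbert \<Rightarrow> 'a set" where
  "cline e = {scaleC c e | c. True}"

definition lines :: "'a::complex_hilbert set set" where
  "lines = {cline e | e. e \<noteq> 0}"

definition rank_one :: "('a::complex_hilbert \<Rightarrow> 'a) \<Rightarrow> bool" where
  "rank_one T \<longleftrightarrow> range T \<in> lines"

text \<open>Infinite-dimensional (over R, equivalently over C).\<close>
definition infinite_dim :: "'a::complex_hilbert itself \<Rightarrow> bool" where
  "infinite_dim _ \<longleftrightarrow> \<not> (\<exists>S::'a set. finite S \<and> span S = UNIV)"

end

theory Submission imports Defs begin
context complex_hilbert begin
subclass banach ..
end

lemma sC_zero[simp]: "scaleC c (0::'a::complex_hilbert) = 0"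
proof -
  have "scaleC c (0::'a) = scaleC c 0 + scaleC c 0" by (metis add_0 scaleC_add_right)
  then show ?thesis by simp
qed

lemma sC_diff: "scaleC c ((x::'a::complex_hilbert) - y) = scaleC c x - scaleC c y"
  by (metis add_diff_cancel diff_add_cancel scaleC_add_right)

lemma sC_minus: "scaleC c (- (x::'a::complex_hilbert)) = - scaleC c x"
  by (metis diff_0 sC_diff sC_zero)

lemma sC_zero_left[simp]: "scaleC 0 (x::'a::complex_hilbert) = 0"
  by (metis of_real_0 scaleC_of_real scale_zero_left)

lemma sC_scaleR: "scaleC c (scaleR r (x::'a::complex_hilbert)) = scaleR r (scaleC c x)"
  by (metis mult.commute scaleC_of_real scaleC_scaleC)

lemma sC_decomp: "scaleC c (x::'a::complex_hilbert) = scaleR (Re c) x + scaleR (Im c) (scaleC \<i> x)"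
proof -
  have "c = complex_of_real (Re c) + \<i> * complex_of_real (Im c)"
    by (metis Complex_eq complex.collapse)
  then have "scaleC c x = scaleC (complex_of_real (Re c)) x + scaleC \<i> (scaleC (complex_of_real (Im c)) x)"
    by (metis scaleC_add_left scaleC_scaleC)
  then show ?thesis by (simp add: scaleC_of_real sC_scaleR)
qed

lemma sC_ii_ii: "scaleC \<i> (scaleC \<i> (x::'a::complex_hilbert)) = - x"
proof -
  have "scaleC \<i> (scaleC \<i> x) = scaleC (complex_of_real (-1)) x" by (simp add: scaleC_scaleC)
  also have "\<dots> = - x" by (simp only: scaleC_of_real) simp
  finally show ?thesis .
qed

lemma inner_ii_left: "inner (scaleC \<i> x) (y::'a::complex_hilbert) = - inner x (scaleC \<i> y)"
  by (metis inner_minus_left inner_scaleC_ii sC_ii_ii)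

lemma inner_ii_self: "inner (scaleC \<i> x) (x::'a::complex_hilbert) = 0"
  by (metis inner_commute inner_ii_left neg_equal_zero)

lemma cinner_scaleC_right: "cinner f (scaleC c u) = c * cinner f (u::'a::complex_hilbert)"
proof -
  have 1: "inner f (scaleC \<i> u) = - inner (scaleC \<i> f) u"
    by (metis inner_commute inner_ii_left)
  show ?thesis
    unfolding cinner_def sC_decomp[of c u]
    by (simp add: inner_add_right 1 inner_scaleC_ii complex_eq_iff algebra_simps)
qed

lemma cinner_self: "cinner f (f::'a::complex_hilbert) = complex_of_real (inner f f)"
  unfolding cinner_def by (simp add: inner_ii_self complex_eq_iff)

lemma cinner_zero_iff: "cinner x (y::'a::complex_hilbert) = 0 \<longleftrightarrow> inner x y = 0 \<and> inner (scaleC \<i> x) y = 0"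
  unfolding cinner_def by (simp add: complex_eq_iff)

definition rop :: "'a::complex_hilbert \<Rightarrow> 'a \<Rightarrow> 'a" where
  "rop f u = scaleC (cinner f u) f"

lemma rop_bop: "bop (rop (f::'a::complex_hilbert))"
proof -
  have eq: "rop f = (\<lambda>u. scaleR (inner f u) f + scaleR (inner (scaleC \<i> f) u) (scaleC \<i> f))"
  proof
    fix u show "rop f u = scaleR (inner f u) f + scaleR (inner (scaleC \<i> f) u) (scaleC \<i> f)"
      unfolding rop_def sC_decomp[of "cinner f u" f] by (simp add: cinner_def)
  qed
  have "bounded_linear (rop f)" unfolding eq
    by (intro bounded_linear_add bounded_linear_scaleR_left bounded_linear_inner_right bounded_linear_ident
        bounded_linear_compose[OF bounded_linear_scaleR_left])
  moreover have "rop f (scaleC c x) = scaleC c (rop f x)" for c x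
    by (simp add: rop_def cinner_scaleC_right scaleC_scaleC)
  ultimately show ?thesis unfolding bop_def by blast
qed

lemma rop_range: assumes "(f::'a::complex_hilbert) \<noteq> 0" shows "range (rop f) = cline f"
proof
  show "range (rop f) \<subseteq> cline f" unfolding cline_def rop_def by auto
  show "cline f \<subseteq> range (rop f)"
  proof
    fix y assume "y \<in> cline f"
    then obtain c where y: "y = scaleC c f" unfolding cline_def by auto
    have nz: "inner f f \<noteq> 0" using assms by simp
    have "rop f (scaleC (c / complex_of_real (inner f f)) f) = y"
      using nz by (simp add: rop_def cinner_scaleC_right cinner_self y)
    then show "y \<in> range (rop f)" by (metis rangeI)
  qed
qed

lemma parallelogram: "norm ((a::'a::real_inner) - b)^2 + norm (a + b)^2 = 2 * norm a ^2 + 2 * norm b ^2"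
  by (simp add: power2_norm_eq_inner inner_diff inner_add inner_commute)

lemma projection_exists:
  fixes K :: "'a::complex_hilbert set"
  assumes cl: "closed K" and z: "0 \<in> K"
    and add: "\<And>a b. a \<in> K \<Longrightarrow> b \<in> K \<Longrightarrow> a + b \<in> K"
    and sc: "\<And>r a. a \<in> K \<Longrightarrow> scaleR r a \<in> K"
  shows "\<exists>p\<in>K. \<forall>k\<in>K. inner (x - p) k = 0"
proof -
  define d where "d = Inf ((\<lambda>k. norm (x - k)) ` K)"
  have bdd: "bdd_below ((\<lambda>k. norm (x - k)) ` K)" by (rule bdd_belowI[of _ 0]) auto
  have dle: "d \<le> norm (x - k)" if "k \<in> K" for k
    unfolding d_def by (rule cInf_lower) (use that bdd in auto)
  have d0: "d \<ge> 0" unfolding d_def by (rule cInf_greatest) (use z in auto)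
  have "\<exists>k\<in>K. norm (x - k) < d + 1 / (real n + 1)" for n
  proof -
    have "Inf ((\<lambda>k. norm (x - k)) ` K) < d + 1 / (real n + 1)" unfolding d_def[symmetric]
      by (simp add: add_pos_pos)
    then show ?thesis using cInf_lessD[of "(\<lambda>k. norm (x - k)) ` K"] z by blast
  qed
  then obtain k where kK: "\<And>n. k n \<in> K" and kd: "\<And>n. norm (x - k n) < d + 1 / (real n + 1)"
    by metis
  define e where "e n = 1 / (real n + 1)" for n
  have e0: "0 < e n" "e n \<le> 1" for n unfolding e_def by auto
  have ksq: "norm (x - k n)^2 \<le> d^2 + (2*d+1) * e n" for n
  proof -
    have "norm (x - k n)^2 \<le> (d + e n)^2"
      using kd[of n] dle[OF kK[of n]] d0 unfolding e_def by (intro power_mono) auto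
    also have "\<dots> = d^2 + 2*d*e n + e n * e n" by (simp add: power2_eq_square algebra_simps)
    also have "\<dots> \<le> d^2 + 2*d*e n + e n" using e0[of n] by (simp add: mult_left_le)
    finally show ?thesis by (simp add: algebra_simps)
  qed
  have kdist: "norm (k m - k n)^2 \<le> 2*(2*d+1) * (e m + e n)" for m n
  proof -
    have mid: "scaleR (1/2) (k m + k n) \<in> K" using kK add sc by blast
    have "d \<le> norm (x - scaleR (1/2) (k m + k n))" by (rule dle[OF mid])
    then have dm: "d^2 \<le> norm (x - scaleR (1/2) (k m + k n))^2" using d0 by (intro power_mono) auto
    have eq1: "(x - k n) - (x - k m) = k m - k n" by simp
    have eq2: "(x - k n) + (x - k m) = scaleR 2 (x - scaleR (1/2) (k m + k n))"
      by (simp add: algebra_simps scaleR_2)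
    have "norm (k m - k n)^2 + norm (scaleR 2 (x - scaleR (1/2) (k m + k n)))^2
        = 2 * norm (x - k n)^2 + 2 * norm (x - k m)^2"
      using parallelogram[of "x - k n" "x - k m"] unfolding eq1 eq2 .
    moreover have "norm (scaleR 2 (x - scaleR (1/2) (k m + k n)))^2 = 4 * norm (x - scaleR (1/2) (k m + k n))^2"
      by (simp add: power2_eq_square)
    ultimately show ?thesis using ksq[of m] ksq[of n] dm by (simp add: algebra_simps)
  qed
  have "Cauchy k"
  proof (rule metric_CauchyI)
    fix eps :: real assume ep: "eps > 0"
    obtain N :: nat where N: "real N > 4*(2*d+1) / eps^2" using reals_Archimedean2 by blast
    show "\<exists>M. \<forall>m\<ge>M. \<forall>n\<ge>M. dist (k m) (k n) < eps"
    proof (intro exI allI impI)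
      fix m n assume mN: "m \<ge> N" and nN: "n \<ge> N"
      have emN: "e m \<le> 1 / (real N + 1)" "e n \<le> 1 / (real N + 1)"
        using mN nN unfolding e_def by (auto intro!: divide_left_mono)
      then have "norm (k m - k n)^2 \<le> 2*(2*d+1) * (2 / (real N + 1))"
      proof -
        have "e m + e n \<le> 2 / (real N + 1)" using emN by simp
        then have "2*(2*d+1) * (e m + e n) \<le> 2*(2*d+1) * (2 / (real N + 1))"
          using d0 by (intro mult_left_mono) auto
        then show ?thesis using kdist[of m n] by linarith
      qed
      also have "\<dots> < eps^2"
      proof -
        have "4*(2*d+1) < eps^2 * real N" using N ep by (simp add: field_simps)
        moreover have "eps^2 > 0" using ep by simp
        moreover have "eps^2 * (real N + 1) = eps^2 * real N + eps^2" by (simp add: algebra_simps)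
        ultimately have "2*(2*d+1)*2 < eps^2 * (real N + 1)" by (simp only: mult.commute)
        then show ?thesis by (simp add: field_simps)
      qed
      finally have "norm (k m - k n) < eps" using ep by (simp add: power_less_imp_less_base)
      then show "dist (k m) (k n) < eps" by (simp add: dist_norm)
    qed
  qed
  then obtain p where kp: "k \<longlonglongrightarrow> p" using convergent_eq_Cauchy by blast
  have pK: "p \<in> K" using cl kK kp closed_sequentially by blast
  have "(\<lambda>n. norm (x - k n)) \<longlonglongrightarrow> norm (x - p)" by (intro tendsto_intros kp)
  moreover have "(\<lambda>n. d + e n) \<longlonglongrightarrow> d + 0"
  proof (intro tendsto_intros)
    show "e \<longlonglongrightarrow> 0" unfolding e_def using LIMSEQ_inverse_real_of_nat
      by (simp add: inverse_eq_divide add.commute)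
  qed
  ultimately have pd: "norm (x - p) \<le> d"
    using kd unfolding e_def by (intro LIMSEQ_le) (auto intro: less_imp_le)
  have pmin: "norm (x - p) \<le> norm (x - q)" if "q \<in> K" for q using pd dle[OF that] by simp
  show ?thesis
  proof (intro bexI[OF _ pK] ballI)
    fix q assume qK: "q \<in> K"
    define a where "a = inner (x - p) q"
    define s where "s = inner q q"
    have s0: "s \<ge> 0" unfolding s_def by simp
    define t where "t = a / (s + 1)"
    have "p + scaleR t q \<in> K" using pK qK add sc by blast
    then have "norm (x - p)^2 \<le> norm (x - (p + scaleR t q))^2"
      using pmin by (intro power_mono) auto
    also have "norm (x - (p + scaleR t q))^2 = norm (x - p)^2 - 2*t*a + t * t * s"
      unfolding a_def s_def power2_norm_eq_inner by (simp add: inner_diff inner_add inner_commute algebra_simps)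
    finally have "2*t*a \<le> t * t * s" by simp
    have ta: "t * (s + 1) = a" unfolding t_def using s0 by simp
    have "2*t*a*(s+1)^2 \<le> t * t * s*(s+1)^2" by (rule mult_right_mono[OF \<open>2*t*a \<le> t * t * s\<close>]) simp
    moreover have "2*t*a*(s+1)^2 = 2*a*(t*(s+1))*(s+1)" by (simp add: power2_eq_square algebra_simps)
    moreover have "t * t * s*(s+1)^2 = (t*(s+1))*(t*(s+1)) * s" by (simp add: power2_eq_square algebra_simps)
    ultimately have "2*a*(t*(s+1))*(s+1) \<le> (t*(s+1))*(t*(s+1)) * s" by simp
    then have "2 * a*a * (s+1) \<le> a * a * s" by (simp only: ta)
    then have "(a * a) * (s + 2) \<le> 0" by (simp add: algebra_simps)
    moreover have "s + 2 > 0" using s0 by simp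
    ultimately have "a * a \<le> 0" by (simp add: mult_le_0_iff)
    then have "a = 0" by (metis mult_eq_0_iff not_square_less_zero order_antisym_conv zero_le_square)
    then show "inner (x - p) q = 0" unfolding a_def .
  qed
qed

lemma closed_graph_bound:
  fixes C :: "'a::complex_hilbert \<Rightarrow> 'a"
  assumes lin: "linear C"
    and cg: "\<And>S y z. S \<longlonglongrightarrow> y \<Longrightarrow> (\<lambda>n. C (S n)) \<longlonglongrightarrow> z \<Longrightarrow> C y = z"
  shows "\<exists>M. \<forall>y. norm (C y) \<le> norm y * M"
proof -
  define F where "F n = {y. norm (C y) \<le> real n}" for n :: nat
  have "\<exists>n. interior (closure (F n)) \<noteq> {}"
  proof (rule ccontr)
    assume "\<not> (\<exists>n. interior (closure (F n)) \<noteq> {})"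
    then have emp: "\<And>n. interior (closure (F n)) = {}" by blast
    have "euclidean interior_of \<Union>(range (\<lambda>n. closure (F n))) = {}"
    proof (rule Baire_category_alt)
      show "completely_metrizable_space (euclidean :: 'a topology) \<or> locally_compact_space (euclidean :: 'a topology) \<and> regular_space (euclidean :: 'a topology)"
        using completely_metrizable_space_euclidean by blast
      show "countable (range (\<lambda>n. closure (F n)))" by simp
      fix T assume "T \<in> range (\<lambda>n. closure (F n))"
      then obtain n where T: "T = closure (F n)" by blast
      have "closedin euclidean T" unfolding T using closed_closure closed_closedin by blast
      moreover have "euclidean interior_of T = {}" unfolding T euclidean_interior_of by (rule emp)
      ultimately show "closedin euclidean T \<and> euclidean interior_of T = {}" by blast
    qed
    moreover have "\<Union>(range (\<lambda>n. closure (F n))) = UNIV"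
    proof -
      have "y \<in> closure (F (nat \<lceil>norm (C y)\<rceil>))" for y
        using closure_subset unfolding F_def by (fastforce intro: real_nat_ceiling_ge)
      then show ?thesis by blast
    qed
    ultimately show False by (simp add: euclidean_interior_of)
  qed
  then obtain N y0 where "y0 \<in> interior (closure (F N))" by blast
  then obtain r where r0: "r > 0" and br: "ball y0 r \<subseteq> closure (F N)" using mem_interior by blast
  have L1: "\<exists>v. norm (u - v) < eps \<and> norm (C v) \<le> 2 * real N" if u: "norm u < r" and ep: "eps > 0" for u eps
  proof -
    have "y0 + u \<in> closure (F N)" using br u by (auto simp: dist_norm)
    then obtain a where aF: "a \<in> F N" and ad: "dist a (y0 + u) < eps / 2"
      using closure_approachable ep by (metis half_gt_zero)
    have "y0 \<in> closure (F N)" using br r0 by auto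
    then obtain b where bF: "b \<in> F N" and bd: "dist b y0 < eps / 2"
      using closure_approachable ep by (metis half_gt_zero)
    have "norm (C (a - b)) \<le> 2 * real N"
      using aF bF unfolding F_def linear_diff[OF lin] by (simp add: norm_triangle_le_diff)
    moreover have "norm (u - (a - b)) < eps"
    proof -
      have "u - (a - b) = (y0 + u - a) - (y0 - b)" by simp
      then have "norm (u - (a - b)) \<le> norm (y0 + u - a) + norm (y0 - b)"
        by (metis norm_triangle_ineq4)
      also have "\<dots> < eps" using ad bd by (simp add: dist_norm norm_minus_commute)
      finally show ?thesis .
    qed
    ultimately show ?thesis by blast
  qed
  define M where "M = 4 * real N / r"
  have M0: "M \<ge> 0" unfolding M_def using r0 by simp
  have L1': "\<exists>y'. norm (y - y') \<le> norm y / 2 \<and> norm (C y') \<le> M * norm y" for y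
  proof (cases "y = 0")
    case True
    then show ?thesis by (intro exI[of _ 0]) (simp add: linear_0[OF lin])
  next
    case False
    define ny where "ny = norm y"
    have ny0: "ny > 0" using False unfolding ny_def by simp
    define u where "u = scaleR (r / (2 * ny)) y"
    have nu: "norm u < r" unfolding u_def ny_def using r0 ny0 unfolding ny_def by simp
    obtain v where v1: "norm (u - v) < r / 4" and v2: "norm (C v) \<le> 2 * real N"
      using L1[OF nu] r0 by (metis zero_less_divide_iff zero_less_numeral)
    define y' where "y' = scaleR (2 * ny / r) v"
    have yu: "scaleR (2 * ny / r) u = y" unfolding u_def using r0 ny0 by simp
    have "y - y' = scaleR (2 * ny / r) (u - v)" unfolding y'_def yu[symmetric] by (simp add: scaleR_diff_right)
    then have "norm (y - y') = (2 * ny / r) * norm (u - v)" using r0 ny0 by simp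
    also have "\<dots> \<le> (2 * ny / r) * (r / 4)" using v1 r0 ny0 by (intro mult_left_mono) auto
    also have "\<dots> = ny / 2" using r0 by simp
    finally have 1: "norm (y - y') \<le> norm y / 2" unfolding ny_def .
    have "norm (C y') = (2 * ny / r) * norm (C v)" unfolding y'_def linear_scale[OF lin] using r0 ny0 by simp
    also have "\<dots> \<le> (2 * ny / r) * (2 * real N)" using v2 r0 ny0 by (intro mult_left_mono) auto
    also have "\<dots> = M * ny" unfolding M_def by simp
    finally show ?thesis using 1 unfolding ny_def by blast
  qed
  then obtain P where P1: "\<And>y. norm (y - P y) \<le> norm y / 2" and P2: "\<And>y. norm (C (P y)) \<le> M * norm y"
    by metis
  have "norm (C y) \<le> norm y * (2 * M)" for y
  proof -
    define R where "R n = ((\<lambda>u. u - P u) ^^ n) y" for n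
    have R0: "R 0 = y" and RS: "\<And>n. R (Suc n) = R n - P (R n)" unfolding R_def by auto
    have Rb: "norm (R n) \<le> norm y * (1/2)^n" for n
    proof (induction n)
      case 0 then show ?case by (simp add: R0)
    next
      case (Suc n)
      have "norm (R (Suc n)) \<le> norm (R n) / 2" unfolding RS by (rule P1)
      also have "\<dots> \<le> norm y * (1/2)^n / 2" using Suc by simp
      finally show ?case by simp
    qed
    define g where "g n = M * norm y * (1/2)^n" for n
    have gs: "summable g" unfolding g_def by (intro summable_mult summable_geometric) simp
    have Cb: "norm (C (P (R n))) \<le> g n" for n
    proof -
      have "norm (C (P (R n))) \<le> M * norm (R n)" by (rule P2)
      also have "\<dots> \<le> M * (norm y * (1/2)^n)" using Rb[of n] M0 by (rule mult_left_mono)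
      finally show ?thesis unfolding g_def by simp
    qed
    have sC: "summable (\<lambda>n. C (P (R n)))" by (rule summable_comparison_test'[OF gs Cb])
    have part: "(\<Sum>k<n. C (P (R k))) = C (y - R n)" for n
    proof (induction n)
      case 0 then show ?case by (simp add: R0 linear_0[OF lin])
    next
      case (Suc n)
      have e: "y - R (Suc n) = (y - R n) + P (R n)" unfolding RS by (simp add: algebra_simps)
      have "C (y - R (Suc n)) = C (y - R n) + C (P (R n))" unfolding e by (rule linear_add[OF lin])
      then show ?case using Suc by simp
    qed
    have climit: "(\<lambda>n. C (y - R n)) \<longlonglongrightarrow> suminf (\<lambda>n. C (P (R n)))"
      using summable_LIMSEQ[OF sC] unfolding part .
    have slimit: "(\<lambda>n. y - R n) \<longlonglongrightarrow> y"
    proof -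
      have "(\<lambda>n. norm y * (1/2::real)^n) \<longlonglongrightarrow> 0"
        by (intro tendsto_mult_right_zero LIMSEQ_power_zero) simp
      moreover have "\<forall>\<^sub>F n in sequentially. norm (R n) \<le> norm y * (1/2)^n"
        using Rb by (intro always_eventually) blast
      ultimately have "R \<longlonglongrightarrow> 0" by (rule Lim_null_comparison[rotated])
      then have "(\<lambda>n. y - R n) \<longlonglongrightarrow> y - 0" by (intro tendsto_intros)
      then show ?thesis by simp
    qed
    have Cy: "C y = suminf (\<lambda>n. C (P (R n)))" by (rule cg[OF slimit climit])
    have "norm (C y) \<le> suminf g" unfolding Cy by (rule norm_suminf_le[OF Cb gs])
    also have "suminf g = M * norm y * 2" unfolding g_def
      by (subst suminf_mult) (auto simp: suminf_geometric)
    finally show ?thesis by (simp add: algebra_simps)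
  qed
  then show ?thesis by blast
qed

lemma bop_bl: "bop T \<Longrightarrow> bounded_linear T" unfolding bop_def by blast
lemma bop_lin: "bop T \<Longrightarrow> linear T" using bop_bl bounded_linear.linear by blast
lemma bop_sC: "bop T \<Longrightarrow> T (scaleC c x) = scaleC c (T x)" unfolding bop_def by blast

lemma douglas_exists:
  fixes A B :: "'a::complex_hilbert \<Rightarrow> 'a"
  assumes bA: "bop A" and bB: "bop B" and rng: "range A \<subseteq> range B"
  shows "\<exists>X. douglas_solution A B X"
proof -
  define K where "K = ker B"
  define Kp where "Kp = {y. \<forall>k\<in>K. inner k y = 0}"
  have linB: "linear B" using bop_lin[OF bB] .
  have linA: "linear A" using bop_lin[OF bA] .
  have Kiff: "k \<in> K \<longleftrightarrow> B k = 0" for k unfolding K_def ker_def by simp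
  have clK: "closed K"
  proof -
    have "K = {x. B x = (\<lambda>x. 0) x}" unfolding K_def ker_def by simp
    also have "closed \<dots>"
      by (intro closed_Collect_eq linear_continuous_on bop_bl[OF bB] continuous_on_const)
    finally show ?thesis .
  qed
  have K0: "0 \<in> K" using Kiff linear_0[OF linB] by simp
  have Kadd: "a + b \<in> K" if "a \<in> K" "b \<in> K" for a b
    using that Kiff linear_add[OF linB] by simp
  have Ksc: "scaleR r a \<in> K" if "a \<in> K" for r a
    using that Kiff linear_scale[OF linB] by simp
  have Kii: "scaleC \<i> a \<in> K" if "a \<in> K" for a
    using that Kiff bop_sC[OF bB] by simp
  have Kp_oc: "Kp = orth_compl (ker B)"
    unfolding Kp_def orth_compl_def K_def[symmetric] cinner_zero_iff using Kii by auto
  have Kpadd: "a + b \<in> Kp" if "a \<in> Kp" "b \<in> Kp" for a b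
    using that unfolding Kp_def by (simp add: inner_add_right)
  have Kpsc: "scaleR r a \<in> Kp" if "a \<in> Kp" for r a
    using that unfolding Kp_def by simp
  have Kpii: "scaleC \<i> a \<in> Kp" if "a \<in> Kp" for a
  proof -
    have "inner k (scaleC \<i> a) = 0" if "k \<in> K" for k
    proof -
      have "inner k (scaleC \<i> a) = - inner (scaleC \<i> k) a" by (metis inner_commute inner_ii_left)
      then show ?thesis using Kii[OF that] \<open>a \<in> Kp\<close> unfolding Kp_def by simp
    qed
    then show ?thesis unfolding Kp_def by blast
  qed
  have KpsC: "scaleC c a \<in> Kp" if "a \<in> Kp" for c a
    unfolding sC_decomp[of c a] using that Kpadd Kpsc Kpii by blast
  have ex: "\<exists>w. w \<in> Kp \<and> B w = A y" for y
  proof -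
    obtain x where x: "B x = A y" using rng by (metis rangeI subsetD rangeE)
    obtain p where pK: "p \<in> K" and pp: "\<forall>k\<in>K. inner (x - p) k = 0"
      using projection_exists[OF clK K0 Kadd Ksc] by blast
    have "x - p \<in> Kp" using pp unfolding Kp_def by (simp add: inner_commute)
    moreover have "B (x - p) = A y" using x pK Kiff linear_diff[OF linB] by simp
    ultimately show ?thesis by blast
  qed
  have uniq: "w1 = w2" if "w1 \<in> Kp" "w2 \<in> Kp" "B w1 = B w2" for w1 w2
  proof -
    have "w1 - w2 \<in> K" using that Kiff linear_diff[OF linB] by simp
    moreover have "w1 - w2 \<in> Kp"
    proof -
      have "w1 + scaleR (-1) w2 \<in> Kp" using that Kpadd Kpsc by blast
      then show ?thesis by simp
    qed
    ultimately have "inner (w1 - w2) (w1 - w2) = 0" unfolding Kp_def by blast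
    then show ?thesis by simp
  qed
  define C where "C y = (THE w. w \<in> Kp \<and> B w = A y)" for y
  have ex1: "\<exists>!w. w \<in> Kp \<and> B w = A y" for y
  proof -
    obtain w where w: "w \<in> Kp \<and> B w = A y" using ex by blast
    show ?thesis
    proof (rule ex1I[of _ w])
      show "w \<in> Kp \<and> B w = A y" by (rule w)
      fix v assume v: "v \<in> Kp \<and> B v = A y"
      show "v = w" by (rule uniq) (use v w in auto)
    qed
  qed
  have C: "C y \<in> Kp \<and> B (C y) = A y" for y
    unfolding C_def by (rule theI'[OF ex1])
  have Cu: "C y = w" if w: "w \<in> Kp" "B w = A y" for w y
  proof (rule uniq)
    show "C y \<in> Kp" using C by blast
    show "w \<in> Kp" by (rule w)
    show "B (C y) = B w" using C w by simp
  qed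
  have CsC: "C (scaleC c y) = scaleC c (C y)" for c y
    by (rule Cu) (use C KpsC bop_sC[OF bB] bop_sC[OF bA] in auto)
  have Cadd: "C (x + y) = C x + C y" for x y
    by (rule Cu) (use C Kpadd linear_add[OF linB] linear_add[OF linA] in auto)
  have CsR: "C (scaleR r y) = scaleR r (C y)" for r y
    using CsC[of "complex_of_real r" y] by (simp add: scaleC_of_real)
  have linC: "linear C" by (rule linearI[OF Cadd CsR])
  have cg: "C y = z" if S: "S \<longlonglongrightarrow> y" and CS: "(\<lambda>n. C (S n)) \<longlonglongrightarrow> z" for S y z
  proof (rule Cu)
    show "z \<in> Kp" unfolding Kp_def
    proof (intro CollectI ballI)
      fix k assume "k \<in> K"
      have "(\<lambda>n. inner k (C (S n))) \<longlonglongrightarrow> inner k z" by (intro tendsto_intros CS)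
      moreover have "(\<lambda>n. inner k (C (S n))) = (\<lambda>n. 0)" using C \<open>k \<in> K\<close> unfolding Kp_def by auto
      ultimately show "inner k z = 0" by (metis LIMSEQ_unique tendsto_const)
    qed
    have "(\<lambda>n. B (C (S n))) \<longlonglongrightarrow> B z" by (rule bounded_linear.tendsto[OF bop_bl[OF bB] CS])
    moreover have "(\<lambda>n. B (C (S n))) = (\<lambda>n. A (S n))" using C by auto
    moreover have "(\<lambda>n. A (S n)) \<longlonglongrightarrow> A y" by (rule bounded_linear.tendsto[OF bop_bl[OF bA] S])
    ultimately show "B z = A y" using LIMSEQ_unique by metis
  qed
  have "\<exists>M. \<forall>y. norm (C y) \<le> norm y * M" by (rule closed_graph_bound[OF linC]) (erule (1) cg)
  then obtain M where M: "\<And>y. norm (C y) \<le> norm y * M" by blast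
  have "bounded_linear C" by (rule bounded_linear_intro[OF Cadd CsR M])
  then have "bop C" unfolding bop_def using CsC by blast
  moreover have "B \<circ> C = A" using C by auto
  moreover have "range C \<subseteq> orth_compl (ker B)" using C Kp_oc by auto
  ultimately show ?thesis unfolding douglas_solution_def by blast
qed

lemma douglas_range: "douglas_solution A B X \<Longrightarrow> range A \<subseteq> range B"
  unfolding douglas_solution_def by auto

lemma BH_iff: "T \<in> BH \<longleftrightarrow> bop T" unfolding BH_def by simp

lemma bop_0: "bop T \<Longrightarrow> T 0 = 0" using bop_lin linear_0 by blast

lemma zero_BH: "(\<lambda>x::'a::complex_hilbert. 0) \<in> BH"
  unfolding BH_iff bop_def by (simp add: bounded_linear_zero)

lemma rop_BH: "rop f \<in> BH" using rop_bop BH_iff by blast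

lemma lines_range: "L \<in> lines \<Longrightarrow> \<exists>R\<in>BH. range R = (L::'a::complex_hilbert set)"
  unfolding lines_def using rop_BH rop_range by blast

lemma zero_range_char:
  assumes "T \<in> BH"
  shows "range T = {0} \<longleftrightarrow> (\<forall>S\<in>BH. range T \<subseteq> range (S::'a::complex_hilbert \<Rightarrow> 'a))"
proof
  assume "range T = {0}"
  then show "\<forall>S\<in>BH. range T \<subseteq> range S" using bop_0 BH_iff by (metis empty_subsetI insert_subset rangeI)
next
  assume "\<forall>S\<in>BH. range T \<subseteq> range S"
  then have "range T \<subseteq> range (\<lambda>x::'a. 0::'a)" using zero_BH by blast
  moreover have "0 \<in> range T" using assms bop_0 BH_iff by (metis rangeI)
  ultimately show "range T = {0}" by auto
qed

lemma atom_char: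
  fixes T :: "'a::complex_hilbert \<Rightarrow> 'a"
  assumes bT: "bop T"
  shows "range T \<in> lines \<longleftrightarrow> range T \<noteq> {0} \<and> (\<forall>S\<in>BH. range S \<subseteq> range T \<longrightarrow> range S = {0} \<or> range S = range T)"
proof
  assume "range T \<in> lines"
  then obtain e where e0: "e \<noteq> 0" and Te: "range T = cline e" unfolding lines_def by blast
  have ein: "e \<in> cline e" unfolding cline_def by (metis (mono_tags) mem_Collect_eq scaleC_one)
  show "range T \<noteq> {0} \<and> (\<forall>S\<in>BH. range S \<subseteq> range T \<longrightarrow> range S = {0} \<or> range S = range T)"
  proof (intro conjI ballI impI)
    show "range T \<noteq> {0}" using ein e0 Te by auto
    fix S assume SB: "S \<in> BH" and sub: "range S \<subseteq> range T"
    show "range S = {0} \<or> range S = range T"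
    proof (cases "range S = {0}")
      case False
      have "0 \<in> range S" using SB bop_0 BH_iff by (metis rangeI)
      then obtain x where Sx: "S x \<noteq> 0" using False by auto
      have "S x \<in> cline e" using sub Te by auto
      then obtain c where c: "S x = scaleC c e" unfolding cline_def by auto
      have c0: "c \<noteq> 0" using c Sx by auto
      have "cline e \<subseteq> range S"
      proof
        fix z assume "z \<in> cline e"
        then obtain d where z: "z = scaleC d e" unfolding cline_def by auto
        have "S (scaleC (d / c) x) = scaleC (d / c) (scaleC c e)" using bop_sC SB BH_iff c by metis
        also have "\<dots> = z" using c0 z by (simp add: scaleC_scaleC)
        finally show "z \<in> range S" by (metis rangeI)
      qed
      then show ?thesis using sub Te by auto
    qed simp
  qed
next
  assume a: "range T \<noteq> {0} \<and> (\<forall>S\<in>BH. range S \<subseteq> range T \<longrightarrow> range S = {0} \<or> range S = range T)"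
  have "0 \<in> range T" using bT bop_0 by (metis rangeI)
  then obtain x where Tx: "T x \<noteq> 0" using a by auto
  define f where "f = T x"
  have rf: "range (rop f) = cline f" using rop_range Tx unfolding f_def by blast
  have sub: "range (rop f) \<subseteq> range T"
  proof
    fix z assume "z \<in> range (rop f)"
    then obtain c where z: "z = scaleC c f" using rf unfolding cline_def by auto
    have "T (scaleC c x) = z" unfolding z f_def using bop_sC[OF bT] by simp
    then show "z \<in> range T" by (metis rangeI)
  qed
  have "f \<in> range (rop f)" unfolding rf cline_def by (metis (mono_tags) mem_Collect_eq scaleC_one)
  then have "range (rop f) \<noteq> {0}" using Tx unfolding f_def by auto
  then have "range (rop f) = range T" using a sub rop_BH by blast
  then show "range T \<in> lines" using rf Tx unfolding lines_def f_def by blast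
qed

theorem mainTheorem6:
  fixes \<phi> :: "('a::complex_hilbert \<Rightarrow> 'a) \<Rightarrow> ('a \<Rightarrow> 'a)"
  assumes "infinite_dim TYPE('a)"
    and "bij_betw \<phi> BH BH"
    and "\<forall>A\<in>BH. \<forall>B\<in>BH. \<forall>X\<in>BH.
           douglas_solution A B X \<longleftrightarrow> douglas_solution (\<phi> A) (\<phi> B) (\<phi> X)"
  shows "(\<forall>A\<in>BH. \<forall>B\<in>BH. range A \<subseteq> range B \<longleftrightarrow> range (\<phi> A) \<subseteq> range (\<phi> B))
    \<and> (\<forall>B\<in>BH. rank_one B \<longrightarrow> rank_one (\<phi> B))
    \<and> (\<exists>\<psi>. (\<forall>A\<in>BH. \<psi> (range A) = range (\<phi> A)) \<and> bij_betw \<psi> lines lines)"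
proof -
  have img: "\<phi> ` BH = BH" using assms(2) unfolding bij_betw_def by blast
  have phiBH: "\<phi> A \<in> BH" if "A \<in> BH" for A using img that by blast
  have surj: "\<exists>X\<in>BH. Y = \<phi> X" if "Y \<in> BH" for Y using img that by blast
  have dg: "douglas_solution A B X \<longleftrightarrow> douglas_solution (\<phi> A) (\<phi> B) (\<phi> X)"
    if "A \<in> BH" "B \<in> BH" "X \<in> BH" for A B X using assms(3) that by blast
  have E1: "range A \<subseteq> range B \<longleftrightarrow> range (\<phi> A) \<subseteq> range (\<phi> B)" if AB: "A \<in> BH" "B \<in> BH" for A B
  proof
    assume "range A \<subseteq> range B"
    then obtain X where X: "douglas_solution A B X" using douglas_exists AB BH_iff by blast
    then have "X \<in> BH" unfolding douglas_solution_def BH_iff by blast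
    then have "douglas_solution (\<phi> A) (\<phi> B) (\<phi> X)" using dg AB X by blast
    then show "range (\<phi> A) \<subseteq> range (\<phi> B)" by (rule douglas_range)
  next
    assume "range (\<phi> A) \<subseteq> range (\<phi> B)"
    then obtain Y where Y: "douglas_solution (\<phi> A) (\<phi> B) Y"
      using douglas_exists phiBH AB BH_iff by blast
    then have "Y \<in> BH" unfolding douglas_solution_def BH_iff by blast
    then obtain X where XB: "X \<in> BH" and YX: "Y = \<phi> X" using surj by blast
    then have "douglas_solution A B X" using dg AB Y by blast
    then show "range A \<subseteq> range B" by (rule douglas_range)
  qed
  have E1eq: "range A = range B \<longleftrightarrow> range (\<phi> A) = range (\<phi> B)" if "A \<in> BH" "B \<in> BH" for A B
    using E1[OF that] E1[OF that(2,1)] by blast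
  have E2: "range A = {0} \<longleftrightarrow> range (\<phi> A) = {0}" if AB: "A \<in> BH" for A
  proof -
    have "range A = {0} \<longleftrightarrow> (\<forall>S\<in>BH. range A \<subseteq> range S)" by (rule zero_range_char[OF AB])
    also have "\<dots> \<longleftrightarrow> (\<forall>S\<in>BH. range (\<phi> A) \<subseteq> range (\<phi> S))" using E1 AB by blast
    also have "\<dots> \<longleftrightarrow> (\<forall>S\<in>BH. range (\<phi> A) \<subseteq> range S)"
    proof
      assume h: "\<forall>S\<in>BH. range (\<phi> A) \<subseteq> range (\<phi> S)"
      show "\<forall>S\<in>BH. range (\<phi> A) \<subseteq> range S"
      proof
        fix S :: "'a \<Rightarrow> 'a" assume "S \<in> BH"
        then obtain X where "X \<in> BH" "S = \<phi> X" using surj by blast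
        then show "range (\<phi> A) \<subseteq> range S" using h by blast
      qed
    next
      assume "\<forall>S\<in>BH. range (\<phi> A) \<subseteq> range S"
      then show "\<forall>S\<in>BH. range (\<phi> A) \<subseteq> range (\<phi> S)" using phiBH by blast
    qed
    also have "\<dots> \<longleftrightarrow> range (\<phi> A) = {0}" by (rule zero_range_char[OF phiBH[OF AB], symmetric])
    finally show ?thesis .
  qed
  have E4: "rank_one A \<longleftrightarrow> rank_one (\<phi> A)" if AB: "A \<in> BH" for A
  proof -
    have bA: "bop A" using AB unfolding BH_iff .
    have bPA: "bop (\<phi> A)" using phiBH[OF AB] unfolding BH_iff .
    have "(range A \<noteq> {0} \<and> (\<forall>S\<in>BH. range S \<subseteq> range A \<longrightarrow> range S = {0} \<or> range S = range A))
      \<longleftrightarrow> (range (\<phi> A) \<noteq> {0} \<and> (\<forall>S\<in>BH. range S \<subseteq> range (\<phi> A) \<longrightarrow> range S = {0} \<or> range S = range (\<phi> A)))"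
      (is "?L \<longleftrightarrow> ?R")
    proof
      assume at: ?L
      show ?R
      proof (intro conjI ballI impI)
        show "range (\<phi> A) \<noteq> {0}" using at E2[OF AB] by simp
        fix S :: "'a \<Rightarrow> 'a" assume SB: "S \<in> BH" and sub: "range S \<subseteq> range (\<phi> A)"
        obtain S' where S'B: "S' \<in> BH" and S: "S = \<phi> S'" using surj[OF SB] by blast
        have "range S' \<subseteq> range A" using E1[OF S'B AB] sub S by simp
        then have "range S' = {0} \<or> range S' = range A" using at S'B by blast
        then show "range S = {0} \<or> range S = range (\<phi> A)" using E2[OF S'B] E1eq[OF S'B AB] S by simp
      qed
    next
      assume at: ?R
      show ?L
      proof (intro conjI ballI impI)
        show "range A \<noteq> {0}" using at E2[OF AB] by simp
        fix S :: "'a \<Rightarrow> 'a" assume SB: "S \<in> BH" and sub: "range S \<subseteq> range A"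
        have "range (\<phi> S) \<subseteq> range (\<phi> A)" using E1[OF SB AB] sub by simp
        then have "range (\<phi> S) = {0} \<or> range (\<phi> S) = range (\<phi> A)" using at phiBH[OF SB] by blast
        then show "range S = {0} \<or> range S = range A" using E2[OF SB] E1eq[OF SB AB] by simp
      qed
    qed
    then show ?thesis unfolding rank_one_def atom_char[OF bA] atom_char[OF bPA] .
  qed
  define \<psi> where "\<psi> L = range (\<phi> (SOME A. A \<in> BH \<and> range A = L))" for L :: "'a set"
  have \<psi>eq: "\<psi> (range A) = range (\<phi> A)" if AB: "A \<in> BH" for A
  proof -
    have "\<exists>A'. A' \<in> BH \<and> range A' = range A" using AB by blast
    then have s: "(SOME A'. A' \<in> BH \<and> range A' = range A) \<in> BH \<and> range (SOME A'. A' \<in> BH \<and> range A' = range A) = range A"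
      by (rule someI_ex)
    then show ?thesis unfolding \<psi>_def using E1eq AB by blast
  qed
  have "bij_betw \<psi> lines lines"
    unfolding bij_betw_def
  proof
    show "inj_on \<psi> lines"
    proof (rule inj_onI)
      fix L1 L2 :: "'a set" assume L1: "L1 \<in> lines" and L2: "L2 \<in> lines" and eq: "\<psi> L1 = \<psi> L2"
      obtain R1 where R1: "R1 \<in> BH" "range R1 = L1" using lines_range[OF L1] by blast
      obtain R2 where R2: "R2 \<in> BH" "range R2 = L2" using lines_range[OF L2] by blast
      have "range (\<phi> R1) = range (\<phi> R2)" using eq \<psi>eq R1 R2 by metis
      then show "L1 = L2" using E1eq R1 R2 by blast
    qed
    show "\<psi> ` lines = lines"
    proof
      show "\<psi> ` lines \<subseteq> lines"
      proof
        fix L' :: "'a set" assume "L' \<in> \<psi> ` lines"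
        then obtain L where L: "L \<in> lines" and L': "L' = \<psi> L" by blast
        obtain R where R: "R \<in> BH" "range R = L" using lines_range[OF L] by blast
        have "rank_one R" unfolding rank_one_def using R L by simp
        then have "rank_one (\<phi> R)" using E4 R by blast
        then show "L' \<in> lines" unfolding rank_one_def L' using \<psi>eq R by metis
      qed
      show "lines \<subseteq> \<psi> ` lines"
      proof
        fix L :: "'a set" assume L: "L \<in> lines"
        obtain R where R: "R \<in> BH" "range R = L" using lines_range[OF L] by blast
        obtain R' where R': "R' \<in> BH" "R = \<phi> R'" using surj R by blast
        have "rank_one (\<phi> R')" unfolding rank_one_def using R R' L by simp
        then have "rank_one R'" using E4 R' by blast
        then have "range R' \<in> lines" unfolding rank_one_def .
        moreover have "\<psi> (range R') = L" using \<psi>eq R R' by simp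
        ultimately show "L \<in> \<psi> ` lines" by blast
      qed
    qed
  qed
  then have p3: "\<exists>\<psi>. (\<forall>A\<in>BH. \<psi> (range A) = range (\<phi> A)) \<and> bij_betw \<psi> lines lines"
    using \<psi>eq by blast
  have p1: "\<forall>A\<in>BH. \<forall>B\<in>BH. range A \<subseteq> range B \<longleftrightarrow> range (\<phi> A) \<subseteq> range (\<phi> B)"
    by (intro ballI) (rule E1)
  have p2: "\<forall>B\<in>BH. rank_one B \<longrightarrow> rank_one (\<phi> B)"
    by (intro ballI impI) (simp add: E4[symmetric])
  show ?thesis using p1 p2 p3 by (intro conjI)
qed
end
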